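(* Let $R$ be a commutative ring with identity satisfying Property $D$. Then the trivial extension $R[x]\propto R[[x]]$ satisfies Property $D$.
   Context: $R[[x]]$ is regarded as an $R[x]$-module via multiplication. For a ring $A$ and an $A$-module $M$, $A\propto M$ is $A\times M$ with coordinatewise addition and $(a,m)(b,n)=(ab,an+bm)$. A ring $A$ satisfies Property $D$ if $A\setminus\mathfrak{N}(A)=\mathrm{reg}(A)$, where $\mathfrak{N}(A)$ is the nilradical and $\mathrm{reg}(A)$ the set of regular elements. *)

theory Defs
  imports "HOL-Computational_Algebra.Polynomial_FPS"
begin

definition nilradical :: "'a::comm_ring_1 set" where
  "nilradical = {a. \<exists>n. a ^ n = 0}"

definition regular_elems :: "'a::comm_ring_1 set" where
  "regular_elems = {a. \<forall>b. a * b = 0 \<longrightarrow> b = 0}"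

definition propertyD :: "'a::comm_ring_1 itself \<Rightarrow> bool" where
  "propertyD _ \<longleftrightarrow> (UNIV - (nilradical :: 'a set)) = regular_elems"

text \<open>The trivial extension R[x] \<propto> R[[x]], where R[[x]] is an R[x]-module
  via multiplication (a polynomial acts through its embedding into R[[x]]).\<close>

declare [[typedef_overloaded]]
datatype ('a::zero) triv_ext = TE "'a poly" "'a fps"

instantiation triv_ext :: (comm_ring_1) comm_ring_1
begin


definition "0 = TE 0 0"
definition "1 = TE 1 0"
fun plus_triv_ext where "TE a m + TE b n = TE (a + b) (m + n)"
fun minus_triv_ext where "TE a m - TE b n = TE (a - b) (m - n)"
fun uminus_triv_ext where "- TE a m = TE (- a) (- m)"
fun times_triv_ext where
  "TE a m * TE b n = TE (a * b) (fps_of_poly a * n + fps_of_poly b * m)"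

instance
proof
  fix x y z :: "'a triv_ext"
  show "x * y * z = x * (y * z)"
    by (cases x; cases y; cases z) (simp add: fps_of_poly_mult algebra_simps)
  show "x * y = y * x"
    by (cases x; cases y) (simp add: algebra_simps)
  show "1 * x = x"
    by (cases x) (simp add: one_triv_ext_def)
  show "(x + y) * z = x * z + y * z"
    by (cases x; cases y; cases z) (simp add: fps_of_poly_add algebra_simps)
  show "x + y + z = x + (y + z)"
    by (cases x; cases y; cases z) simp
  show "x + y = y + x"
    by (cases x; cases y) (simp add: add.commute)
  show "0 + x = x"
    by (cases x) (simp add: zero_triv_ext_def)
  show "- x + x = 0"
    by (cases x) (simp add: zero_triv_ext_def)
  show "x - y = x + - y"
    by (cases x; cases y) simp
  show "(0::'a triv_ext) \<noteq> 1"
    by (simp add: zero_triv_ext_def one_triv_ext_def)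
qed

end

end

theory Submission
  imports Defs
begin

unbundle fps_syntax

definition nilp :: "'a::comm_ring_1 \<Rightarrow> bool" where
  "nilp x \<longleftrightarrow> (\<exists>n. x ^ n = 0)"

definition regp :: "'a::comm_ring_1 \<Rightarrow> bool" where
  "regp x \<longleftrightarrow> (\<forall>b. x * b = 0 \<longrightarrow> b = 0)"

lemma reg_not_nilp:
  fixes x :: "'a::comm_ring_1"
  assumes "regp x" shows "\<not> nilp x"
proof -
  have "x ^ n \<noteq> 0" for n
  proof (induction n)
    case 0 then show ?case by simp
  next
    case (Suc n)
    then show ?case using assms unfolding regp_def by (metis power_Suc)
  qed
  then show ?thesis unfolding nilp_def by auto
qed

lemma reg_mult:
  fixes x y :: "'a::comm_ring_1"
  assumes "regp x" "regp y" shows "regp (x * y)"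
  using assms unfolding regp_def by (metis mult.assoc)

lemma reg_pow:
  fixes x :: "'a::comm_ring_1"
  assumes "regp x" shows "regp (x ^ j)"
proof (induction j)
  case 0 show ?case unfolding regp_def by simp
next
  case (Suc j) then show ?case using assms reg_mult by (metis power_Suc)
qed

lemma reg_plus_nilp:
  fixes r n :: "'a::comm_ring_1"
  assumes r: "regp r" and n: "nilp n"
  shows "regp (r + n)"
  unfolding regp_def
proof (intro allI impI)
  fix b assume h: "(r + n) * b = 0"
  have "r * b + n * b = 0" using h by (simp only: distrib_right)
  then have rb: "r * b = (- n) * b" by (simp add: eq_neg_iff_add_eq_0)
  have pw: "r ^ j * b = (- n) ^ j * b" for j
  proof (induction j)
    case 0 then show ?case by simp
  next
    case (Suc j)
    have "r ^ Suc j * b = r * (r ^ j * b)" by (simp only: power_Suc mult.assoc)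
    also have "\<dots> = r * ((- n) ^ j * b)" by (simp only: Suc.IH)
    also have "\<dots> = (- n) ^ j * (r * b)" by (simp add: ac_simps)
    also have "\<dots> = (- n) ^ j * ((- n) * b)" by (simp only: rb)
    also have "\<dots> = (- n) ^ Suc j * b" by (simp only: power_Suc2 mult.assoc)
    finally show ?case .
  qed
  obtain k where k: "n ^ k = 0" using n unfolding nilp_def by auto
  have "(- n) ^ k = 0" by (subst power_minus) (simp add: k)
  then have "r ^ k * b = 0" using pw[of k] by (metis mult_zero_left)
  then show "b = 0" using reg_pow[OF r, of k] unfolding regp_def by blast
qed

lemma nilp_add:
  fixes x y :: "'a::comm_ring_1"
  assumes "nilp x" "nilp y" shows "nilp (x + y)"
proof -
  obtain n m where n: "x ^ n = 0" and m: "y ^ m = 0" using assms unfolding nilp_def by auto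
  have "(x + y) ^ (n + m) = (\<Sum>k\<le>n+m. of_nat ((n+m) choose k) * x ^ k * y ^ (n + m - k))"
    by (rule binomial_ring)
  also have "\<dots> = 0"
  proof (rule sum.neutral, intro ballI)
    fix k assume "k \<in> {..n+m}"
    show "of_nat ((n+m) choose k) * x ^ k * y ^ (n + m - k) = 0"
    proof (cases "n \<le> k")
      case True
      then have "k = n + (k - n)" by simp
      then have "x ^ k = x ^ n * x ^ (k - n)" by (metis power_add)
      then have "x ^ k = 0" using n by (metis mult_zero_left)
      then show ?thesis by (metis mult_zero_left mult_zero_right)
    next
      case False
      then have "n + m - k = m + (n - k)" by simp
      then have "y ^ (n + m - k) = y ^ m * y ^ (n - k)" by (metis power_add)
      then have "y ^ (n + m - k) = 0" using m by (metis mult_zero_left)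
      then show ?thesis by (metis mult_zero_right)
    qed
  qed
  finally show ?thesis unfolding nilp_def by blast
qed

lemma nilp_mult:
  fixes x y :: "'a::comm_ring_1"
  assumes "nilp x" shows "nilp (x * y)"
proof -
  obtain n where n: "x ^ n = 0" using assms unfolding nilp_def by auto
  have "(x * y) ^ n = x ^ n * y ^ n" by (rule power_mult_distrib)
  then have "(x * y) ^ n = 0" using n by (metis mult_zero_left)
  then show ?thesis unfolding nilp_def by blast
qed

lemma poly_nilp:
  fixes p :: "'a::comm_ring_1 poly"
  assumes "\<forall>i. nilp (coeff p i)" shows "nilp p"
  using assms
proof (induction p rule: pCons_induct)
  case 0 then show ?case unfolding nilp_def by (rule_tac x=1 in exI) simp
next
  case (pCons a p)
  have a: "nilp a" using pCons.prems[rule_format, of 0] by simp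
  have "nilp p" using pCons.IH pCons.prems by (metis coeff_pCons_Suc)
  have e: "pCons a p = [:a:] + p * [:0, 1:]"
    by (simp add: poly_eq_iff coeff_pCons split: nat.splits)
  have "nilp [:a:]" using a unfolding nilp_def by (auto simp: poly_const_pow)
  moreover have "nilp (p * [:0, 1:])" using \<open>nilp p\<close> by (rule nilp_mult)
  ultimately show ?case unfolding e by (rule nilp_add)
qed

lemma fps_reg0:
  fixes f :: "'a::comm_ring_1 fps"
  assumes "regp (f $ 0)" shows "regp f"
  unfolding regp_def
proof (intro allI impI)
  fix b assume h: "f * b = 0"
  have "b $ n = 0" for n
  proof (induction n rule: less_induct)
    case (less n)
    have "(f * b) $ n = (\<Sum>i=0..n. f$i * b$(n - i))" by (rule fps_mult_nth)
    also have "\<dots> = f $ 0 * b $ n + (\<Sum>i=Suc 0..n. f$i * b$(n - i))"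
      by (simp add: sum.atLeast_Suc_atMost)
    also have "(\<Sum>i=Suc 0..n. f$i * b$(n - i)) = 0"
      by (rule sum.neutral) (auto simp: less)
    finally have "f $ 0 * b $ n = 0" using h by simp
    then show ?case using assms unfolding regp_def by blast
  qed
  then show "b = 0" by (simp add: fps_eq_iff)
qed

lemma fps_regi:
  fixes f :: "'a::comm_ring_1 fps"
  assumes "\<forall>j<i. nilp (f $ j)" "regp (f $ i)" shows "regp f"
  using assms
proof (induction i arbitrary: f)
  case 0 then show ?case by (simp add: fps_reg0)
next
  case (Suc i)
  define g where "g = Abs_fps (\<lambda>n. f $ Suc n)"
  have "regp g" using Suc.IH[of g] Suc.prems by (simp add: g_def)
  have e: "f = fps_const (f $ 0) + fps_X * g"
    by (simp add: fps_eq_iff g_def)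
  have "regp (fps_X * g)" unfolding regp_def
  proof (intro allI impI)
    fix b assume "fps_X * g * b = 0"
    then have "fps_X * (g * b) = 0" by (simp add: mult.assoc)
    then have "g * b = 0"
      by (metis (no_types) fps_ext fps_X_mult_nth nat.distinct(1) diff_Suc_1 fps_zero_nth)
    then show "b = 0" using \<open>regp g\<close> unfolding regp_def by blast
  qed
  moreover have "nilp (fps_const (f $ 0))"
  proof -
    obtain k where "(f $ 0) ^ k = 0" using Suc.prems(1) unfolding nilp_def by auto
    then have "fps_const (f $ 0) ^ k = 0" by (simp only: fps_const_power fps_const_0_eq_0)
    then show ?thesis unfolding nilp_def by blast
  qed
  ultimately have "regp (fps_X * g + fps_const (f $ 0))" by (rule reg_plus_nilp)
  then show ?case using e by (simp add: add.commute)
qed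

lemma te_pow0: "(TE (a::'a::comm_ring_1 poly) 0) ^ n = TE (a ^ n) 0"
  by (induction n) (auto simp: one_triv_ext_def)

lemma nilp_TE:
  fixes a :: "'a::comm_ring_1 poly"
  assumes "nilp a" shows "nilp (TE a m)"
proof -
  have "TE a m = TE a 0 + TE 0 m" by simp
  moreover have "nilp (TE a 0)" using assms unfolding nilp_def by (auto simp: te_pow0 zero_triv_ext_def)
  moreover have "nilp (TE 0 m)" unfolding nilp_def
    by (rule exI[of _ 2]) (simp add: power2_eq_square zero_triv_ext_def)
  ultimately show ?thesis by (metis nilp_add)
qed

lemma propD_iff: "propertyD TYPE('a::comm_ring_1) \<longleftrightarrow> (\<forall>x::'a. \<not> nilp x \<longrightarrow> regp x)"
proof
  assume "propertyD TYPE('a)"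
  then have e: "UNIV - (nilradical :: 'a set) = regular_elems" unfolding propertyD_def .
  show "\<forall>x::'a. \<not> nilp x \<longrightarrow> regp x"
  proof (intro allI impI)
    fix x :: 'a assume "\<not> nilp x"
    then have "x \<in> UNIV - nilradical" by (simp add: nilradical_def nilp_def)
    then have "x \<in> regular_elems" using e by simp
    then show "regp x" by (simp add: regular_elems_def regp_def)
  qed
next
  assume h: "\<forall>x::'a. \<not> nilp x \<longrightarrow> regp x"
  have "x \<in> UNIV - nilradical \<longleftrightarrow> x \<in> regular_elems" for x :: 'a
  proof
    assume "x \<in> UNIV - nilradical"
    then have "\<not> nilp x" by (simp add: nilradical_def nilp_def)
    then show "x \<in> regular_elems" using h by (simp add: regular_elems_def regp_def)
  next
    assume "x \<in> regular_elems"
    then have "regp x" by (simp add: regular_elems_def regp_def)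
    then have "\<not> nilp x" by (rule reg_not_nilp)
    then show "x \<in> UNIV - nilradical" by (simp add: nilradical_def nilp_def)
  qed
  then show "propertyD TYPE('a)" unfolding propertyD_def by blast
qed

theorem mainTheorem15:
  assumes "propertyD TYPE('a::comm_ring_1)"
  shows "propertyD TYPE('a triv_ext)"
  unfolding propD_iff
proof (intro allI impI)
  have D: "\<And>x::'a. \<not> nilp x \<Longrightarrow> regp x" using assms unfolding propD_iff by blast
  fix z :: "'a triv_ext" assume nz: "\<not> nilp z"
  obtain a m where z: "z = TE a m" by (cases z)
  have "\<exists>i. \<not> nilp (coeff a i)"
  proof (rule ccontr)
    assume "\<not> (\<exists>i. \<not> nilp (coeff a i))"
    then have "nilp a" by (intro poly_nilp) simp
    then have "nilp (TE a m)" by (rule nilp_TE)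
    then show False using nz z by simp
  qed
  then obtain i where i: "\<not> nilp (coeff a i)" and lt: "\<forall>j<i. nilp (coeff a j)"
    using exists_least_iff[of "\<lambda>i. \<not> nilp (coeff a i)"] by blast
  have F: "regp (fps_of_poly a)" using fps_regi[of i "fps_of_poly a"] lt D[OF i] by simp
  show "regp z" unfolding regp_def z
  proof (intro allI impI)
    fix w assume h: "TE a m * w = 0"
    obtain b n where w: "w = TE b n" by (cases w)
    have ab: "a * b = 0" and an: "fps_of_poly a * n + fps_of_poly b * m = 0"
      using h by (auto simp: w zero_triv_ext_def)
    have "fps_of_poly a * fps_of_poly b = 0" using ab by (simp flip: fps_of_poly_mult)
    then have "fps_of_poly b = 0" using F unfolding regp_def by blast
    then have b0: "b = 0" by (simp add: fps_of_poly_eq_iff[of b 0, simplified])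
    then have "fps_of_poly a * n = 0" using an by simp
    then have "n = 0" using F unfolding regp_def by blast
    then show "w = 0" using w b0 by (simp add: zero_triv_ext_def)
  qed
qed

end
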